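(* Let $k$ be a field of characteristic zero, $A_1=k[t,\partial]$ the first Weyl algebra, $R=k[t]$. Let $I$ be a right ideal of $A_1$ with $I\cap k[\partial]\neq\{0\}$, and let $W$ be the primary decomposable subspace of $R$ such that $\theta(I)=\mathcal{D}(R,W)$. Let $q(\partial)\in k[\partial]$ and $\tau:=\exp(\mathrm{ad}(q(\partial)))$. Then $\tau(I)=I$ if and only if $\theta(q(\partial))\in S(W)$.
   Context: $A_1$ is generated by $t,\partial$ with $\partial t-t\partial=1$. $\theta$ is the $k$-automorphism of $A_1$ with $\theta(\partial)=t$, $\theta(t)=-\partial$. Elements of $k(t)[\partial]$ act as $k$-linear endomorphisms of $k(t)$; for subspaces $V,W\subseteq k(t)$, $\mathcal{D}(V,W):=\{d\in k(t)[\partial]: d(V)\subseteq W\}$. For $b\in R$, $\mathcal{O}(b):=\{a\in R: a'\in bR\}$; for a subspace $V\subseteq R$, $S(V):=\{a\in R: aV\subseteq V\}$. A non-zero $k$-subspace $V$ of $R$ is primary decomposable if $S(V)\supseteq\mathcal{O}(b)$ for some $b\neq0$. For $q\in A_1$ with $d\mapsto [d,q]=dq-qd$ locally nilpotent (e.g. $q\in k[\partial]$), $\exp(\mathrm{ad}(q))$ is the automorphism $d\mapsto \sum_{j\ge0}\frac{1}{j!}\mathrm{ad}(q)^j(d)$ where $\mathrm{ad}(q)(d)=[d,q]$. *)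

theory Defs
  imports "HOL-Computational_Algebra.Polynomial" "HOL-Computational_Algebra.Fraction_Field"
begin

text \<open>The first Weyl algebra A_1 = k[t,d] is represented by normal forms
  sum_i a_i(t) d^i, i.e. by the type 'a poly poly: a polynomial in d whose
  coefficients are polynomials in t (written on the left).  R = k[t] is 'a poly.\<close>

definition weyl_mult :: "'a::field poly poly \<Rightarrow> 'a poly poly \<Rightarrow> 'a poly poly" where
  "weyl_mult p q = (\<Sum>i\<le>degree p. \<Sum>j\<le>degree q. \<Sum>l\<le>i.
      monom (smult (of_nat (i choose l)) (coeff p i * (pderiv ^^ l) (coeff q j))) (i + j - l))"

definition weyl_pow :: "'a::field poly poly \<Rightarrow> nat \<Rightarrow> 'a poly poly" where
  "weyl_pow x n = (weyl_mult x ^^ n) 1"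

definition weyl_scal :: "'a::field \<Rightarrow> 'a poly poly \<Rightarrow> 'a poly poly" where
  "weyl_scal c x = map_poly (smult c) x"

definition weyl_d :: "'a::field poly poly" where
  "weyl_d = monom 1 1"

definition weyl_t :: "'a::field poly poly" where
  "weyl_t = [:[:0, 1:]:]"

definition weyl_theta :: "'a::field poly poly \<Rightarrow> 'a poly poly" where
  "weyl_theta p = (\<Sum>i\<le>degree p. \<Sum>j\<le>degree (coeff p i).
      weyl_scal (coeff (coeff p i) j) (weyl_mult (weyl_pow (- weyl_d) j) (weyl_pow weyl_t i)))"

definition weyl_of_kd :: "'a::field poly \<Rightarrow> 'a poly poly" where
  "weyl_of_kd q = map_poly (\<lambda>c. [:c:]) q"

definition weyl_kd :: "'a::field poly poly set" where
  "weyl_kd = range weyl_of_kd"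

definition weyl_right_ideal :: "'a::field poly poly set \<Rightarrow> bool" where
  "weyl_right_ideal I \<longleftrightarrow> 0 \<in> I \<and> (\<forall>x\<in>I. \<forall>y\<in>I. x + y \<in> I) \<and>
     (\<forall>x\<in>I. \<forall>a. weyl_mult x a \<in> I)"

definition weyl_ad :: "'a::field poly poly \<Rightarrow> 'a poly poly \<Rightarrow> 'a poly poly" where
  "weyl_ad q d = weyl_mult d q - weyl_mult q d"

definition weyl_exp_ad :: "'a::field_char_0 poly poly \<Rightarrow> 'a poly poly \<Rightarrow> 'a poly poly" where
  "weyl_exp_ad q d = (\<Sum>j < (LEAST n. (weyl_ad q ^^ n) d = 0).
      weyl_scal (1 / fact j) ((weyl_ad q ^^ j) d))"

definition poly_to_frac :: "'a::field poly \<Rightarrow> 'a poly fract" where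
  "poly_to_frac p = Fract p 1"

definition diffop_act :: "'a::field poly fract poly \<Rightarrow> 'a poly \<Rightarrow> 'a poly fract" where
  "diffop_act d f = (\<Sum>i\<le>degree d. coeff d i * poly_to_frac ((pderiv ^^ i) f))"

definition D_RW :: "'a::field poly set \<Rightarrow> 'a poly fract poly set" where
  "D_RW W = {d. \<forall>f. diffop_act d f \<in> poly_to_frac ` W}"

definition k_subspace :: "'a::field poly set \<Rightarrow> bool" where
  "k_subspace V \<longleftrightarrow> 0 \<in> V \<and> (\<forall>x\<in>V. \<forall>y\<in>V. x + y \<in> V) \<and> (\<forall>c. \<forall>x\<in>V. smult c x \<in> V)"

definition stab_S :: "'a::field poly set \<Rightarrow> 'a poly set" where
  "stab_S V = {a. \<forall>v\<in>V. a * v \<in> V}"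

definition ord_O :: "'a::field poly \<Rightarrow> 'a poly set" where
  "ord_O b = {a. b dvd pderiv a}"

definition primary_decomposable :: "'a::field poly set \<Rightarrow> bool" where
  "primary_decomposable V \<longleftrightarrow> k_subspace V \<and> V \<noteq> {0} \<and> (\<exists>b. b \<noteq> 0 \<and> ord_O b \<subseteq> stab_S V)"

end

theory Submission
  imports Defs
begin

definition act :: "'a::field poly poly \<Rightarrow> 'a poly \<Rightarrow> 'a poly" where
  "act x f = (\<Sum>i\<le>degree x. coeff x i * (pderiv ^^ i) f)"

lemma act_bound:
  assumes "degree x \<le> M"
  shows "act x f = (\<Sum>i\<le>M. coeff x i * (pderiv ^^ i) f)"
proof -
  have "(\<Sum>i\<le>M. coeff x i * (pderiv ^^ i) f) = (\<Sum>i\<le>degree x. coeff x i * (pderiv ^^ i) f)"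
    by (rule sum.mono_neutral_right) (use assms in \<open>auto simp: coeff_eq_0\<close>)
  then show ?thesis by (simp add: act_def)
qed

lemma act_add: "act (x + y) f = act x f + act y f"
proof -
  let ?M = "max (degree x) (max (degree y) (degree (x+y)))"
  show ?thesis
    by (subst (1 2 3) act_bound[of _ ?M]) (auto simp: sum.distrib algebra_simps)
qed

lemma act_0[simp]: "act 0 f = 0" by (simp add: act_def)

lemma act_uminus: "act (- x) f = - act x f"
  by (simp add: act_def sum_negf)

lemma act_diff: "act (x - y) f = act x f - act y f"
  using act_add[of x "-y" f] by (simp add: act_uminus)

lemma act_sum: "act (\<Sum>a\<in>A. g a) f = (\<Sum>a\<in>A. act (g a) f)"
  by (induction A rule: infinite_finite_induct) (auto simp: act_add)

lemma act_monom: "act (monom a n) f = a * (pderiv ^^ n) f"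
proof -
  have "act (monom a n) f = (\<Sum>i\<le>n. coeff (monom a n) i * (pderiv ^^ i) f)"
    by (rule act_bound) (simp add: degree_monom_le)
  also have "\<dots> = a * (pderiv ^^ n) f"
    by (subst sum.remove[of _ n]) (auto simp: coeff_monom)
  finally show ?thesis .
qed

lemma act_const: "act [:a:] f = a * f"
  using act_monom[of a 0 f] by (simp add: monom_0)

lemma act_smultp: "act (smult c x) f = c * act x f"
proof -
  have "act (smult c x) f = (\<Sum>i\<le>degree x. coeff (smult c x) i * (pderiv ^^ i) f)"
    by (rule act_bound) (simp add: degree_smult_le)
  then show ?thesis by (simp add: act_def sum_distrib_left mult.assoc)
qed

lemma act_scal: "act (weyl_scal c x) f = smult c (act x f)"
proof -
  have "weyl_scal c x = smult [:c:] x"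
    by (simp add: weyl_scal_def poly_eq_iff coeff_map_poly)
  then show ?thesis by (simp add: act_smultp)
qed

lemma smult_sum_right: "smult c (\<Sum>a\<in>A. g a) = (\<Sum>a\<in>A. smult c (g a))"
  by (induction A rule: infinite_finite_induct) (auto simp: smult_add_right)

lemma pderiv_sum: "pderiv (\<Sum>a\<in>A. g a) = (\<Sum>a\<in>A. pderiv (g a))"
  by (induction A rule: infinite_finite_induct) (auto simp: pderiv_add)

lemma act_add_right: "act x (f + g) = act x f + act x g"
  by (simp add: act_def higher_pderiv_add distrib_left sum.distrib)

lemma act_smult_right: "act x (smult c f) = smult c (act x f)"
  by (simp add: act_def higher_pderiv_smult sum_distrib_left smult_sum_right)

lemma act_zero_right[simp]: "act x 0 = 0" by (simp add: act_def)

lemma act_sum_right: "act x (\<Sum>a\<in>A. g a) = (\<Sum>a\<in>A. act x (g a))"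
  by (induction A rule: infinite_finite_induct) (simp_all add: act_add_right)

lemma higher_pderiv_mult:
  "(pderiv ^^ n) (a * b) = (\<Sum>l\<le>n. smult (of_nat (n choose l)) ((pderiv ^^ l) a * (pderiv ^^ (n - l)) b))"
proof (induction n)
  case 0
  then show ?case by simp
next
  case (Suc n)
  define A where "A l = (pderiv ^^ l) a" for l
  define B where "B l = (pderiv ^^ l) b" for l
  have pA: "pderiv (A l) = A (Suc l)" for l by (simp add: A_def)
  have pB: "pderiv (B l) = B (Suc l)" for l by (simp add: B_def)
  have "(pderiv ^^ Suc n) (a * b) = pderiv (\<Sum>l\<le>n. smult (of_nat (n choose l)) (A l * B (n - l)))"
    using Suc by (simp add: A_def B_def)
  also have "\<dots> = (\<Sum>l\<le>n. smult (of_nat (n choose l)) (A (Suc l) * B (n - l))) +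
                  (\<Sum>l\<le>n. smult (of_nat (n choose l)) (A l * B (Suc (n - l))))"
    by (simp add: pderiv_sum pderiv_smult pderiv_mult pA pB sum.distrib smult_add_right algebra_simps)
  also have "(\<Sum>l\<le>n. smult (of_nat (n choose l)) (A (Suc l) * B (n - l))) =
             (\<Sum>l\<le>Suc n. smult (of_nat (n choose (l - 1))) (if l = 0 then 0 else A l * B (Suc n - l)))"
    by (subst sum.atMost_Suc_shift) simp
  also have "(\<Sum>l\<le>n. smult (of_nat (n choose l)) (A l * B (Suc (n - l)))) =
             (\<Sum>l\<le>Suc n. smult (of_nat (n choose l)) (A l * B (Suc n - l)))"
    by (simp add: Suc_diff_le binomial_eq_0)
  also have "(\<Sum>l\<le>Suc n. smult (of_nat (n choose (l - 1))) (if l = 0 then 0 else A l * B (Suc n - l))) +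
             (\<Sum>l\<le>Suc n. smult (of_nat (n choose l)) (A l * B (Suc n - l))) =
             (\<Sum>l\<le>Suc n. smult (of_nat (Suc n choose l)) (A l * B (Suc n - l)))"
    unfolding sum.distrib[symmetric]
  proof (rule sum.cong)
    fix l assume "l \<in> {..Suc n}"
    show "smult (of_nat (n choose (l - 1))) (if l = 0 then 0 else A l * B (Suc n - l)) +
          smult (of_nat (n choose l)) (A l * B (Suc n - l)) =
          smult (of_nat (Suc n choose l)) (A l * B (Suc n - l))"
      by (cases l) (simp_all add: smult_add_left[symmetric] add.commute)
  qed simp
  finally show ?case by (simp add: A_def B_def)
qed

lemma pderiv_comp: "(pderiv ^^ m) ((pderiv ^^ n) f) = (pderiv ^^ (m + n)) f"
  by (simp add: funpow_add)

lemma act_mult: "act (weyl_mult p q) f = act p (act q f)"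
proof -
  have "act (weyl_mult p q) f = (\<Sum>i\<le>degree p. \<Sum>j\<le>degree q. \<Sum>l\<le>i.
      smult (of_nat (i choose l)) (coeff p i * (pderiv ^^ l) (coeff q j)) * (pderiv ^^ (i + j - l)) f)"
    by (simp add: weyl_mult_def act_sum act_monom)
  also have "\<dots> = (\<Sum>i\<le>degree p. coeff p i * (\<Sum>j\<le>degree q. \<Sum>l\<le>i.
      smult (of_nat (i choose l)) ((pderiv ^^ l) (coeff q j) * (pderiv ^^ (i - l)) ((pderiv ^^ j) f))))"
    by (auto simp: sum_distrib_left pderiv_comp mult.assoc intro!: sum.cong)
  also have "\<dots> = act p (act q f)"
    by (simp add: act_def higher_pderiv_sum higher_pderiv_mult)
  finally show ?thesis .
qed

lemma higher_pderiv_monom_self: "(pderiv ^^ n) (monom c n) = [:of_nat (fact n) * c:]"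
proof (induction n arbitrary: c)
  case 0 then show ?case by (simp add: monom_0)
next
  case (Suc n)
  have "(pderiv ^^ Suc n) (monom c (Suc n)) = (pderiv ^^ n) (pderiv (monom c (Suc n)))"
    by (simp only: funpow_Suc_right o_apply)
  also have "\<dots> = [:of_nat (fact (Suc n)) * c:]" by (simp add: pderiv_monom Suc algebra_simps)
  finally show ?case .
qed

lemma higher_pderiv_monom_gt:
  assumes "n < i" shows "(pderiv ^^ i) (monom (c::'a::field_char_0) n) = 0"
proof -
  define m where "m = i - Suc n"
  have i: "i = m + (Suc 0 + n)" using assms unfolding m_def by arith
  have "(pderiv ^^ i) (monom c n) = (pderiv ^^ m) ((pderiv ^^ Suc 0) ((pderiv ^^ n) (monom c n)))"
    by (simp only: i pderiv_comp add.assoc)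
  also have "\<dots> = 0" by (simp add: higher_pderiv_monom_self pderiv_pCons)
  finally show ?thesis .
qed

lemma act_inj0:
  fixes x :: "'a::field_char_0 poly poly"
  assumes "\<And>f. act x f = 0" shows "x = 0"
proof (rule ccontr)
  assume x0: "x \<noteq> 0"
  define i0 where "i0 = (LEAST i. coeff x i \<noteq> 0)"
  have ex: "\<exists>i. coeff x i \<noteq> 0" using x0 by (metis leading_coeff_0_iff)
  have c0: "coeff x i0 \<noteq> 0" unfolding i0_def by (rule LeastI_ex[OF ex])
  have lt: "coeff x i = 0" if "i < i0" for i using not_less_Least[of i "\<lambda>i. coeff x i \<noteq> 0"] that
    unfolding i0_def by blast
  have le: "i0 \<le> degree x" using c0 le_degree by blast
  have Z: "\<forall>i\<in>{..degree x} - {i0}. coeff x i * (pderiv ^^ i) (monom 1 i0) = 0"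
  proof
    fix i assume i: "i \<in> {..degree x} - {i0}"
    show "coeff x i * (pderiv ^^ i) (monom 1 i0) = 0"
    proof (cases "i < i0")
      case True then show ?thesis by (simp add: lt)
    next
      case False then have "i0 < i" using i by auto
      then show ?thesis by (simp add: higher_pderiv_monom_gt)
    qed
  qed
  have "act x (monom 1 i0) = (\<Sum>i\<le>degree x. coeff x i * (pderiv ^^ i) (monom 1 i0))"
    by (simp add: act_def)
  also have "\<dots> = coeff x i0 * (pderiv ^^ i0) (monom 1 i0)"
    using le by (simp add: sum.remove[of _ i0] sum.neutral[OF Z])
  also have "\<dots> = smult (of_nat (fact i0)) (coeff x i0)" by (simp add: higher_pderiv_monom_self)
  also have "\<dots> \<noteq> 0" using c0 by simp
  finally show False using assms by simp
qed

lemma act_inj: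
  fixes x :: "'a::field_char_0 poly poly"
  assumes "\<And>f. act x f = act y f" shows "x = y"
  using act_inj0[of "x - y"] assms by (simp add: act_diff)

notation weyl_mult (infixl "\<odot>" 70)


lemma wm_assoc: "(x \<odot> y) \<odot> z = x \<odot> (y \<odot> (z::'a::field_char_0 poly poly))"
  by (rule act_inj) (simp add: act_mult)

lemma wm_add_left: "(x + y) \<odot> z = x \<odot> z + y \<odot> (z::'a::field_char_0 poly poly)"
  by (rule act_inj) (simp add: act_mult act_add)

lemma wm_add_right: "z \<odot> (x + y) = z \<odot> x + z \<odot> (y::'a::field_char_0 poly poly)"
  by (rule act_inj) (simp add: act_mult act_add act_add_right)

lemma wm_diff_left: "(x - y) \<odot> z = x \<odot> z - y \<odot> (z::'a::field_char_0 poly poly)"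
  by (rule act_inj) (simp add: act_mult act_diff)

lemma act_diff_right: "act x (f - g) = act x f - act x g"
  using act_add_right[of x "f - g" g] by simp

lemma act_uminus_right: "act x (- f) = - act x f"
  using act_diff_right[of x 0 f] by simp

lemma wm_diff_right: "z \<odot> (x - y) = z \<odot> x - z \<odot> (y::'a::field_char_0 poly poly)"
  by (rule act_inj) (simp add: act_mult act_diff act_diff_right)

lemma wm_uminus_left: "(- x) \<odot> z = - (x \<odot> (z::'a::field_char_0 poly poly))"
  by (rule act_inj) (simp add: act_mult act_uminus)

lemma wm_uminus_right: "z \<odot> (- x) = - (z \<odot> (x::'a::field_char_0 poly poly))"
  by (rule act_inj) (simp add: act_mult act_uminus act_uminus_right)

lemma wm_0_left[simp]: "0 \<odot> (z::'a::field_char_0 poly poly) = 0"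
  by (rule act_inj) (simp add: act_mult)

lemma wm_0_right[simp]: "z \<odot> 0 = (0::'a::field_char_0 poly poly)"
  by (rule act_inj) (simp add: act_mult)

lemma act_1[simp]: "act 1 f = f"
  using act_const[of 1 f] by (simp add: one_pCons)

lemma wm_1_left[simp]: "1 \<odot> (z::'a::field_char_0 poly poly) = z"
  by (rule act_inj) (simp add: act_mult)

lemma wm_1_right[simp]: "z \<odot> 1 = (z::'a::field_char_0 poly poly)"
  by (rule act_inj) (simp add: act_mult)

lemma wm_scal_left: "weyl_scal c x \<odot> z = weyl_scal c (x \<odot> (z::'a::field_char_0 poly poly))"
  by (rule act_inj) (simp add: act_mult act_scal)

lemma wm_scal_right: "z \<odot> weyl_scal c x = weyl_scal c (z \<odot> (x::'a::field_char_0 poly poly))"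
  by (rule act_inj) (simp add: act_mult act_scal act_smult_right)

lemma wm_sum_left: "(\<Sum>a\<in>A. g a) \<odot> z = (\<Sum>a\<in>A. g a \<odot> (z::'a::field_char_0 poly poly))"
  by (rule act_inj) (simp add: act_mult act_sum)

lemma wm_sum_right: "z \<odot> (\<Sum>a\<in>A. g a) = (\<Sum>a\<in>A. z \<odot> (g a::'a::field_char_0 poly poly))"
  by (rule act_inj) (simp add: act_mult act_sum act_sum_right)

lemma scal_add_left: "weyl_scal (a + b) x = weyl_scal a x + weyl_scal b (x::'a::field_char_0 poly poly)"
  by (rule act_inj) (simp add: act_add act_scal smult_add_left)

lemma scal_add_right: "weyl_scal c (x + y) = weyl_scal c x + weyl_scal c (y::'a::field_char_0 poly poly)"
  by (rule act_inj) (simp add: act_add act_scal smult_add_right)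

lemma scal_diff_right: "weyl_scal c (x - y) = weyl_scal c x - weyl_scal c (y::'a::field_char_0 poly poly)"
  by (rule act_inj) (simp add: act_diff act_scal smult_diff_right)

lemma scal_0[simp]: "weyl_scal 0 (x::'a::field_char_0 poly poly) = 0"
  by (rule act_inj) (simp add: act_scal)

lemma scal_0_right[simp]: "weyl_scal c (0::'a::field_char_0 poly poly) = 0"
  by (rule act_inj) (simp add: act_scal)

lemma scal_1[simp]: "weyl_scal 1 (x::'a::field_char_0 poly poly) = x"
  by (rule act_inj) (simp add: act_scal)

lemma scal_scal: "weyl_scal a (weyl_scal b x) = weyl_scal (a * b) (x::'a::field_char_0 poly poly)"
  by (rule act_inj) (simp add: act_scal)

lemma scal_minus1: "weyl_scal (-1) x = - (x::'a::field_char_0 poly poly)"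
  by (rule act_inj) (simp add: act_scal act_uminus)

lemma scal_sum_right: "weyl_scal c (\<Sum>a\<in>A. g a) = (\<Sum>a\<in>A. weyl_scal c (g a::'a::field_char_0 poly poly))"
  by (rule act_inj) (simp add: act_scal act_sum smult_sum_right)

lemma act_pow: "act (weyl_pow x n) f = (act x ^^ n) f"
  by (induction n arbitrary: f) (simp_all add: weyl_pow_def act_mult)

lemma weyl_pow_Suc: "weyl_pow x (Suc n) = x \<odot> weyl_pow x n"
  by (simp add: weyl_pow_def)

lemma weyl_pow_Suc': "weyl_pow x (Suc n) = weyl_pow x n \<odot> (x::'a::field_char_0 poly poly)"
  by (rule act_inj) (simp add: act_pow act_mult funpow_Suc_right del: funpow.simps)

lemma weyl_pow_0[simp]: "weyl_pow x 0 = 1" by (simp add: weyl_pow_def)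

abbreviation "tt \<equiv> [:0, 1:]"

lemma act_t: "act weyl_t f = tt * f"
  by (simp add: weyl_t_def act_const)

lemma act_d: "act weyl_d f = pderiv f"
  by (simp add: weyl_d_def act_monom)

lemma act_tpow: "act (weyl_pow weyl_t n) f = tt ^ n * f"
  by (induction n arbitrary: f) (simp_all add: weyl_pow_Suc act_mult act_t)

lemma act_dpow: "act (weyl_pow weyl_d n) f = (pderiv ^^ n) f"
  by (simp add: act_pow act_d[abs_def])

lemma act_mdpow: "act (weyl_pow (- weyl_d) n) f = smult ((-1) ^ n) ((pderiv ^^ n) f)"
  by (induction n arbitrary: f) (simp_all add: weyl_pow_Suc act_mult act_uminus act_d pderiv_smult)

definition mon :: "nat \<Rightarrow> nat \<Rightarrow> 'a::field poly poly" where
  "mon j i = monom (monom 1 j) i"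

definition Bm :: "nat \<Rightarrow> nat \<Rightarrow> 'a::field poly poly" where
  "Bm j i = weyl_pow (- weyl_d) j \<odot> weyl_pow weyl_t i"

lemma tpow_monom: "tt ^ n = monom 1 n"
  by (simp add: monom_altdef)

lemma act_mon: "act (mon j i) f = monom 1 j * (pderiv ^^ i) f"
  by (simp add: mon_def act_monom)

lemma act_Bm: "act (Bm j i) f = smult ((-1) ^ j) ((pderiv ^^ j) (monom 1 i * (f::'a::field_char_0 poly)))"
  by (simp add: Bm_def act_mult act_mdpow act_tpow tpow_monom)

lemma theta_sum_bound:
  fixes x :: "'a::field_char_0 poly poly"
  assumes A: "degree x \<le> A" and B: "\<And>i. degree (coeff x i) \<le> B"
  shows "weyl_theta x = (\<Sum>i\<le>A. \<Sum>j\<le>B. weyl_scal (coeff (coeff x i) j) (Bm j i))"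
proof -
  have inner: "(\<Sum>j\<le>degree (coeff x i). weyl_scal (coeff (coeff x i) j) (Bm j i)) =
               (\<Sum>j\<le>B. weyl_scal (coeff (coeff x i) j) (Bm j i))" for i
    by (rule sum.mono_neutral_left) (use B in \<open>auto simp: coeff_eq_0\<close>)
  have "weyl_theta x = (\<Sum>i\<le>degree x. \<Sum>j\<le>degree (coeff x i). weyl_scal (coeff (coeff x i) j) (Bm j i))"
    by (simp add: weyl_theta_def Bm_def)
  also have "\<dots> = (\<Sum>i\<le>degree x. \<Sum>j\<le>B. weyl_scal (coeff (coeff x i) j) (Bm j i))"
    by (rule sum.cong[OF refl inner])
  also have "\<dots> = (\<Sum>i\<le>A. \<Sum>j\<le>B. weyl_scal (coeff (coeff x i) j) (Bm j i))"
    by (rule sum.mono_neutral_left) (use A in \<open>auto simp: coeff_eq_0\<close>)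
  finally show ?thesis .
qed

definition cdeg :: "'a::zero poly poly \<Rightarrow> nat" where
  "cdeg x = Max ((\<lambda>i. degree (coeff x i)) ` {..degree x})"

lemma cdeg: "degree (coeff x i) \<le> cdeg x"
proof (cases "i \<le> degree x")
  case True then show ?thesis unfolding cdeg_def by (intro Max_ge) auto
next
  case False then show ?thesis by (simp add: coeff_eq_0)
qed

lemma theta_add: "weyl_theta (x + y) = weyl_theta x + weyl_theta (y::'a::field_char_0 poly poly)"
proof -
  let ?A = "max (degree x) (max (degree y) (degree (x + y)))"
  let ?B = "max (cdeg x) (max (cdeg y) (cdeg (x + y)))"
  have Bx: "degree (coeff x i) \<le> ?B" for i using cdeg[of x i] by auto
  have By: "degree (coeff y i) \<le> ?B" for i using cdeg[of y i] by auto
  have Bxy: "degree (coeff (x + y) i) \<le> ?B" for i using cdeg[of "x+y" i] by auto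
  have Ax: "degree x \<le> ?A" and Ay: "degree y \<le> ?A" and Axy: "degree (x+y) \<le> ?A" by auto
  show ?thesis
    unfolding theta_sum_bound[OF Ax Bx] theta_sum_bound[OF Ay By]
      theta_sum_bound[OF Axy Bxy]
    by (auto simp: scal_add_left sum.distrib)
qed

lemma theta_scal: "weyl_theta (weyl_scal c x) = weyl_scal c (weyl_theta (x::'a::field_char_0 poly poly))"
proof -
  have cx: "coeff (weyl_scal c x) i = smult c (coeff x i)" for i
    by (simp add: weyl_scal_def coeff_map_poly)
  have dx: "degree (weyl_scal c x) \<le> degree x"
    by (rule degree_le) (simp add: cx coeff_eq_0)
  show ?thesis
    apply (subst (1 2) theta_sum_bound[of _ "degree x" "cdeg x"])
    using dx cdeg[of x] by (auto simp: cx scal_scal scal_sum_right degree_smult_le intro: order_trans[OF degree_smult_le])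
qed

lemma theta_0[simp]: "weyl_theta (0::'a::field_char_0 poly poly) = 0"
  using theta_scal[of 0 "0::'a poly poly"] by simp

lemma theta_uminus: "weyl_theta (- x) = - weyl_theta (x::'a::field_char_0 poly poly)"
  using theta_scal[of "-1" x] by (simp add: scal_minus1)

lemma theta_diff: "weyl_theta (x - y) = weyl_theta x - weyl_theta (y::'a::field_char_0 poly poly)"
  using theta_add[of x "-y"] by (simp add: theta_uminus)

lemma theta_sum: "weyl_theta (\<Sum>a\<in>A. g a) = (\<Sum>a\<in>A. weyl_theta (g a::'a::field_char_0 poly poly))"
  by (induction A rule: infinite_finite_induct) (simp_all add: theta_add)

lemma coeff_mon: "coeff (coeff (mon j i) i') j' = (if i' = i \<and> j' = j then 1 else 0)"
  by (simp add: mon_def coeff_monom)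

lemma scal_if: "weyl_scal (if P then 1 else 0) z = (if P then z else (0::'a::field_char_0 poly poly))"
  by simp

lemma theta_mon: "weyl_theta (mon j i) = (Bm j i :: 'a::field_char_0 poly poly)"
proof -
  have dj: "degree (coeff (mon j i :: 'a poly poly) i') \<le> j" for i'
    by (simp add: mon_def coeff_monom degree_monom_le)
  have di: "degree (mon j i :: 'a poly poly) \<le> i" by (simp add: mon_def degree_monom_le)
  have "weyl_theta (mon j i :: 'a poly poly) = (\<Sum>i'\<le>i. \<Sum>j'\<le>j. weyl_scal (coeff (coeff (mon j i) i') j') (Bm j' i'))"
    by (rule theta_sum_bound[OF di dj])
  also have "\<dots> = (\<Sum>i'\<le>i. if i' = i then (\<Sum>j'\<le>j. if j' = j then Bm j i else 0) else 0)"
    by (intro sum.cong refl) (auto simp: coeff_mon scal_if intro!: sum.cong)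
  also have "\<dots> = Bm j i"
    by simp
  finally show ?thesis .
qed

lemma scal_mon: "weyl_scal c (mon j i) = monom (monom c j) i"
  by (simp add: weyl_scal_def mon_def map_poly_monom smult_monom)

lemma decomp:
  fixes x :: "'a::field_char_0 poly poly"
  assumes A: "degree x \<le> A" and B: "\<And>i. degree (coeff x i) \<le> B"
  shows "x = (\<Sum>i\<le>A. \<Sum>j\<le>B. weyl_scal (coeff (coeff x i) j) (mon j i))"
proof -
  have "(\<Sum>i\<le>A. \<Sum>j\<le>B. weyl_scal (coeff (coeff x i) j) (mon j i)) =
        (\<Sum>i\<le>A. monom (\<Sum>j\<le>B. monom (coeff (coeff x i) j) j) i)"
    by (simp add: scal_mon monom_sum)
  also have "\<dots> = (\<Sum>i\<le>A. monom (coeff x i) i)"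
    using B by (simp add: poly_as_sum_of_monoms')
  also have "\<dots> = x" using A by (simp add: poly_as_sum_of_monoms')
  finally show ?thesis ..
qed

lemma higher_pderiv_minus: "(pderiv ^^ n) (- f) = - (pderiv ^^ n) (f::'a::field poly)"
  using higher_pderiv_smult[of n "-1" f] by simp

lemma higher_pderiv_diff: "(pderiv ^^ n) (f - g) = (pderiv ^^ n) f - (pderiv ^^ n) (g::'a::field poly)"
  using higher_pderiv_add[of n f "-g"] by (simp add: higher_pderiv_minus)

lemma higher_pderiv_tmul:
  "(pderiv ^^ i) (pCons 0 f) = pCons 0 ((pderiv ^^ i) f) + smult (of_nat i) ((pderiv ^^ (i - 1)) (f::'a::field_char_0 poly))"
proof (induction i)
  case 0 then show ?case by simp
next
  case (Suc i)
  show ?case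
  proof (cases i)
    case 0 then show ?thesis by (simp add: pderiv_pCons)
  next
    case (Suc m)
    have "(pderiv ^^ Suc i) (pCons 0 f) = pderiv (pCons 0 ((pderiv ^^ i) f) + smult (of_nat i) ((pderiv ^^ (i - 1)) f))"
      using Suc.IH by simp
    also have "\<dots> = (pderiv ^^ i) f + pCons 0 ((pderiv ^^ Suc i) f) + smult (of_nat i) ((pderiv ^^ i) f)"
      using Suc by (simp add: pderiv_add pderiv_smult pderiv_pCons)
    also have "\<dots> = pCons 0 ((pderiv ^^ Suc i) f) + smult (of_nat (Suc i)) ((pderiv ^^ i) f)"
      by (simp add: smult_add_left algebra_simps)
    finally show ?thesis by simp
  qed
qed

lemma act_Bm': "act (Bm j i) f = smult ((-1) ^ j) ((pderiv ^^ j) (tt ^ i * (f::'a::field_char_0 poly)))"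
  by (simp add: act_Bm tpow_monom)

lemma act_mon': "act (mon j i) f = tt ^ j * (pderiv ^^ i) (f::'a::field_char_0 poly)"
  by (simp add: act_mon tpow_monom)

lemma mon_T: "mon j i \<odot> weyl_t = mon (Suc j) i + weyl_scal (of_nat i) (mon j (i - 1) :: 'a::field_char_0 poly poly)"
  by (rule act_inj) (simp add: act_mult act_add act_scal act_mon' act_t higher_pderiv_tmul algebra_simps)

lemma mon_D: "mon j i \<odot> weyl_d = (mon j (Suc i) :: 'a::field_char_0 poly poly)"
  by (rule act_inj) (simp add: act_mult act_mon' act_d funpow_Suc_right del: funpow.simps)

lemma Bm_D: "Bm j i \<odot> (- weyl_d) = Bm (Suc j) i + weyl_scal (of_nat i) (Bm j (i - 1) :: 'a::field_char_0 poly poly)"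
proof (rule act_inj)
  fix f :: "'a poly"
  have pp: "pderiv (tt ^ i * f) = tt ^ i * pderiv f + smult (of_nat i) (tt ^ (i - 1) * f)"
    by (simp add: pderiv_mult pderiv_power pderiv_pCons algebra_simps)
  have "act (Bm (Suc j) i + weyl_scal (of_nat i) (Bm j (i - 1))) f =
     smult ((-1) ^ Suc j) ((pderiv ^^ j) (pderiv (tt ^ i * f))) + smult (of_nat i) (smult ((-1) ^ j) ((pderiv ^^ j) (tt ^ (i-1) * f)))"
    by (simp add: act_add act_scal act_Bm' funpow_Suc_right del: funpow.simps)
  also have "\<dots> = smult ((-1) ^ j) ((pderiv ^^ j) (tt ^ i * - pderiv f))"
    unfolding pp by (simp add: higher_pderiv_add higher_pderiv_smult higher_pderiv_minus algebra_simps smult_add_right)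
  also have "\<dots> = act (Bm j i \<odot> (- weyl_d)) f"
    by (simp add: act_mult act_uminus act_d act_Bm')
  finally show "act (Bm j i \<odot> - weyl_d) f = act (Bm (Suc j) i + weyl_scal (of_nat i) (Bm j (i - 1))) f" ..
qed

lemma Bm_T: "Bm j i \<odot> weyl_t = (Bm j (Suc i) :: 'a::field_char_0 poly poly)"
  by (rule act_inj) (simp add: act_mult act_Bm' act_t mult.assoc mult.commute)

lemma mul_decomp:
  fixes x :: "'a::field_char_0 poly poly"
  shows "x \<odot> z = (\<Sum>i\<le>degree x. \<Sum>j\<le>cdeg x. weyl_scal (coeff (coeff x i) j) (mon j i \<odot> z))"
proof -
  have xd: "x = (\<Sum>i\<le>degree x. \<Sum>j\<le>cdeg x. weyl_scal (coeff (coeff x i) j) (mon j i))"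
    by (rule decomp) (simp_all add: cdeg)
  have "x \<odot> z = (\<Sum>i\<le>degree x. \<Sum>j\<le>cdeg x. weyl_scal (coeff (coeff x i) j) (mon j i)) \<odot> z"
    using xd by (rule arg_cong)
  then show ?thesis by (simp add: wm_sum_left wm_scal_left)
qed

lemma theta_expand:
  fixes x :: "'a::field_char_0 poly poly"
  shows "weyl_theta x = (\<Sum>i\<le>degree x. \<Sum>j\<le>cdeg x. weyl_scal (coeff (coeff x i) j) (Bm j i))"
  by (rule theta_sum_bound) (simp_all add: cdeg)

lemma theta_mul_gen:
  fixes x z Z :: "'a::field_char_0 poly poly"
  assumes "\<And>j i. weyl_theta (mon j i \<odot> z) = Bm j i \<odot> Z"
  shows "weyl_theta (x \<odot> z) = weyl_theta x \<odot> Z"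
  by (subst mul_decomp, subst theta_expand) (simp add: theta_sum theta_scal assms wm_sum_left wm_scal_left)

lemma theta_mul_T: "weyl_theta (x \<odot> weyl_t) = weyl_theta x \<odot> (- weyl_d :: 'a::field_char_0 poly poly)"
  by (rule theta_mul_gen) (simp add: mon_T theta_add theta_scal theta_mon Bm_D)

lemma theta_mul_D: "weyl_theta (x \<odot> weyl_d) = weyl_theta x \<odot> (weyl_t :: 'a::field_char_0 poly poly)"
  by (rule theta_mul_gen) (simp add: mon_D theta_mon Bm_T)

lemma wpow1: "weyl_pow x (Suc 0) = (x::'a::field_char_0 poly poly)"
  by (simp add: weyl_pow_def)

lemma t_mon: "weyl_t = mon 1 0" by (simp add: weyl_t_def mon_def monom_0 monom_Suc)
lemma d_mon: "weyl_d = mon 0 1" by (simp add: weyl_d_def mon_def monom_0)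

lemma theta_t: "weyl_theta weyl_t = (- weyl_d :: 'a::field_char_0 poly poly)"
  by (simp add: t_mon theta_mon Bm_def wpow1)

lemma theta_d: "weyl_theta weyl_d = (weyl_t :: 'a::field_char_0 poly poly)"
  by (simp add: d_mon theta_mon Bm_def wpow1)

lemma theta_1: "weyl_theta 1 = (1 :: 'a::field_char_0 poly poly)"
proof -
  have m: "mon 0 0 = (1::'a poly poly)" by (simp add: mon_def monom_0 one_pCons)
  have "weyl_theta (mon 0 0) = (1::'a poly poly)" by (simp add: theta_mon Bm_def)
  then show ?thesis by (simp only: m)
qed

lemma mon_Suc_j: "mon (Suc j) 0 = mon j 0 \<odot> (weyl_t :: 'a::field_char_0 poly poly)"
  by (simp add: mon_T)

lemma mon_Suc_i: "mon j (Suc i) = mon j i \<odot> (weyl_d :: 'a::field_char_0 poly poly)"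
  by (simp add: mon_D)

lemma theta_mult_mon:
  "weyl_theta (x \<odot> mon j i) = weyl_theta x \<odot> weyl_theta (mon j i :: 'a::field_char_0 poly poly)"
proof (induction i arbitrary: x)
  case 0
  show ?case
  proof (induction j arbitrary: x)
    case 0
    have "(mon 0 0 :: 'a poly poly) = 1" by (simp add: mon_def monom_0 one_pCons)
    then show ?case by (simp add: theta_1)
  next
    case (Suc j)
    show ?case
      by (simp only: mon_Suc_j wm_assoc[symmetric] theta_mul_T Suc)
  qed
next
  case (Suc i)
  show ?case
    by (simp only: mon_Suc_i wm_assoc[symmetric] theta_mul_D Suc)
qed

lemma theta_mult: "weyl_theta (x \<odot> y) = weyl_theta x \<odot> weyl_theta (y :: 'a::field_char_0 poly poly)"
proof -
  have yd: "y = (\<Sum>i\<le>degree y. \<Sum>j\<le>cdeg y. weyl_scal (coeff (coeff y i) j) (mon j i))"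
    by (rule decomp) (simp_all add: cdeg)
  have "weyl_theta (x \<odot> y) = weyl_theta (x \<odot> (\<Sum>i\<le>degree y. \<Sum>j\<le>cdeg y. weyl_scal (coeff (coeff y i) j) (mon j i)))"
    using yd by (rule arg_cong)
  also have "\<dots> = weyl_theta x \<odot> weyl_theta (\<Sum>i\<le>degree y. \<Sum>j\<le>cdeg y. weyl_scal (coeff (coeff y i) j) (mon j i))"
    by (simp add: wm_sum_right wm_scal_right theta_sum theta_scal theta_mult_mon)
  also have "\<dots> = weyl_theta x \<odot> weyl_theta y" using yd[symmetric] by simp
  finally show ?thesis .
qed

definition th4 :: "'a::field_char_0 poly poly \<Rightarrow> 'a poly poly" where
  "th4 x = weyl_theta (weyl_theta (weyl_theta (weyl_theta x)))"

lemma th4_mult: "th4 (x \<odot> y) = th4 x \<odot> th4 y"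
  by (simp add: th4_def theta_mult)

lemma th4_t: "th4 weyl_t = weyl_t"
  by (simp add: th4_def theta_t theta_d theta_uminus)

lemma th4_d: "th4 weyl_d = weyl_d"
  by (simp add: th4_def theta_t theta_d theta_uminus)

lemma th4_mon: "th4 (mon j i) = mon j i"
proof (induction i)
  case 0
  show ?case
  proof (induction j)
    case 0
    have "(mon 0 0 :: 'a poly poly) = 1" by (simp add: mon_def monom_0 one_pCons)
    then show ?case by (simp add: th4_def theta_1)
  next
    case (Suc j)
    then show ?case by (simp only: mon_Suc_j th4_mult th4_t)
  qed
next
  case (Suc i)
  then show ?case by (simp only: mon_Suc_i th4_mult th4_d)
qed

lemma th4_id: "th4 x = x"
proof -
  have xd: "x = (\<Sum>i\<le>degree x. \<Sum>j\<le>cdeg x. weyl_scal (coeff (coeff x i) j) (mon j i))"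
    by (rule decomp) (simp_all add: cdeg)
  have "th4 x = th4 (\<Sum>i\<le>degree x. \<Sum>j\<le>cdeg x. weyl_scal (coeff (coeff x i) j) (mon j i))"
    using xd by (rule arg_cong)
  also have "\<dots> = x" by (subst (2) xd) (simp add: th4_def theta_sum theta_scal th4_mon[unfolded th4_def])
  finally show ?thesis .
qed

lemma theta_inj: "inj (weyl_theta :: 'a::field_char_0 poly poly \<Rightarrow> _)"
  by (rule inj_on_inverseI[where g="\<lambda>x. weyl_theta (weyl_theta (weyl_theta x))"])
     (use th4_id in \<open>simp add: th4_def\<close>)

lemma theta_kd: "weyl_theta (weyl_of_kd q) = [:q:]"
  for q :: "'a::field_char_0 poly"
proof (rule act_inj)
  fix f :: "'a poly"
  have c: "coeff (weyl_of_kd q) i = [:coeff q i:]" for i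
    by (simp add: weyl_of_kd_def coeff_map_poly)
  have d1: "degree (weyl_of_kd q) \<le> degree q"
    by (rule degree_le) (simp add: c coeff_eq_0)
  have d2: "degree (coeff (weyl_of_kd q) i) \<le> 0" for i by (simp add: c)
  have "act (weyl_theta (weyl_of_kd q)) f = (\<Sum>i\<le>degree q. smult (coeff q i) (tt ^ i * f))"
    by (simp add: theta_sum_bound[OF d1 d2] act_sum act_scal c act_Bm')
  also have "\<dots> = (\<Sum>i\<le>degree q. monom (coeff q i) i) * f"
    by (simp add: sum_distrib_right monom_altdef)
  also have "\<dots> = act [:q:] f" by (simp add: poly_as_sum_of_monoms act_const)
  finally show "act (weyl_theta (weyl_of_kd q)) f = act [:q:] f" .
qed

type_synonym 'a wa = "'a poly poly"

lemma theta_ad: "weyl_theta (weyl_ad Q x) = weyl_ad (weyl_theta Q) (weyl_theta (x::'a::field_char_0 wa))"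
  by (simp add: weyl_ad_def theta_diff theta_mult)

lemma theta_adpow: "weyl_theta ((weyl_ad Q ^^ n) x) = (weyl_ad (weyl_theta Q) ^^ n) (weyl_theta (x::'a::field_char_0 wa))"
  by (induction n) (simp_all add: theta_ad)

lemma theta_eq0: "weyl_theta x = 0 \<longleftrightarrow> (x::'a::field_char_0 wa) = 0"
  using theta_inj[where 'a='a] theta_0[where 'a='a] by (metis injD)

lemma theta_exp: "weyl_theta (weyl_exp_ad Q x) = weyl_exp_ad (weyl_theta Q) (weyl_theta (x::'a::field_char_0 wa))"
proof -
  have L: "(LEAST n. (weyl_ad Q ^^ n) x = 0) = (LEAST n. (weyl_ad (weyl_theta Q) ^^ n) (weyl_theta x) = 0)"
    by (simp add: theta_adpow[symmetric] theta_eq0)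
  show ?thesis unfolding weyl_exp_ad_def L
    by (simp add: theta_sum theta_scal theta_adpow)
qed

lemma ad_add: "weyl_ad P (x + y) = weyl_ad P x + weyl_ad P (y::'a::field_char_0 wa)"
  by (simp add: weyl_ad_def wm_add_left wm_add_right)
lemma ad_diff: "weyl_ad P (x - y) = weyl_ad P x - weyl_ad P (y::'a::field_char_0 wa)"
  by (simp add: weyl_ad_def wm_diff_left wm_diff_right)
lemma ad_scal: "weyl_ad P (weyl_scal c x) = weyl_scal c (weyl_ad P (x::'a::field_char_0 wa))"
  by (simp add: weyl_ad_def wm_scal_left wm_scal_right scal_diff_right)
lemma ad_0[simp]: "weyl_ad P 0 = (0::'a::field_char_0 wa)"
  by (simp add: weyl_ad_def)
lemma ad_sum: "weyl_ad P (\<Sum>a\<in>A. g a) = (\<Sum>a\<in>A. weyl_ad P (g a::'a::field_char_0 wa))"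
  by (induction A rule: infinite_finite_induct) (simp_all add: ad_add)

lemma adpow_0[simp]: "(weyl_ad P ^^ n) 0 = (0::'a::field_char_0 wa)"
  by (induction n) simp_all
lemma adpow_diff: "(weyl_ad P ^^ n) (x - y) = (weyl_ad P ^^ n) x - (weyl_ad P ^^ n) (y::'a::field_char_0 wa)"
  by (induction n) (simp_all add: ad_diff)
lemma adpow_scal: "(weyl_ad P ^^ n) (weyl_scal c x) = weyl_scal c ((weyl_ad P ^^ n) (x::'a::field_char_0 wa))"
  by (induction n) (simp_all add: ad_scal)
lemma adpow_sum: "(weyl_ad P ^^ n) (\<Sum>a\<in>A. g a) = (\<Sum>a\<in>A. (weyl_ad P ^^ n) (g a::'a::field_char_0 wa))"
  by (induction n) (simp_all add: ad_sum)
lemma adpow_add: "(weyl_ad P ^^ m) ((weyl_ad P ^^ n) x) = (weyl_ad P ^^ (m + n)) (x::'a::field_char_0 wa)"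
  by (simp add: funpow_add)

lemma ad_explicit:
  fixes x :: "'a::field_char_0 wa"
  shows "weyl_ad [:p:] x = (\<Sum>i\<le>degree x. \<Sum>l\<in>{0<..i}.
            monom (smult (of_nat (i choose l)) (coeff x i * (pderiv ^^ l) p)) (i - l))"
proof (rule act_inj)
  fix f
  have "act (weyl_ad [:p:] x) f = act x (p * f) - p * act x f"
    by (simp add: weyl_ad_def act_diff act_mult act_const)
  also have "\<dots> = (\<Sum>i\<le>degree x. coeff x i * ((pderiv ^^ i) (p * f) - p * (pderiv ^^ i) f))"
    unfolding act_def by (simp add: sum_subtractf sum_distrib_left algebra_simps)
  also have "\<dots> = (\<Sum>i\<le>degree x. coeff x i * (\<Sum>l\<in>{0<..i}. smult (of_nat (i choose l)) ((pderiv ^^ l) p * (pderiv ^^ (i - l)) f)))"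
  proof (rule sum.cong[OF refl])
    fix i
    have "(pderiv ^^ i) (p * f) = (\<Sum>l\<in>{0..i}. smult (of_nat (i choose l)) ((pderiv ^^ l) p * (pderiv ^^ (i - l)) f))"
      by (simp add: higher_pderiv_mult atLeast0AtMost)
    also have "\<dots> = p * (pderiv ^^ i) f + (\<Sum>l\<in>{0<..i}. smult (of_nat (i choose l)) ((pderiv ^^ l) p * (pderiv ^^ (i - l)) f))"
      by (simp add: sum.head)
    finally show "coeff x i * ((pderiv ^^ i) (p * f) - p * (pderiv ^^ i) f) =
        coeff x i * (\<Sum>l\<in>{0<..i}. smult (of_nat (i choose l)) ((pderiv ^^ l) p * (pderiv ^^ (i - l)) f))"
      by simp
  qed
  also have "\<dots> = act (\<Sum>i\<le>degree x. \<Sum>l\<in>{0<..i}.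
            monom (smult (of_nat (i choose l)) (coeff x i * (pderiv ^^ l) p)) (i - l)) f"
    by (simp add: act_sum act_monom sum_distrib_left mult.assoc)
  finally show "act (weyl_ad [:p:] x) f = act (\<Sum>i\<le>degree x. \<Sum>l\<in>{0<..i}.
            monom (smult (of_nat (i choose l)) (coeff x i * (pderiv ^^ l) p)) (i - l)) f" .
qed

lemma coeff_ad_zero:
  fixes x :: "'a::field_char_0 wa"
  assumes "degree x \<le> n"
  shows "coeff (weyl_ad [:p:] x) n = 0"
  unfolding ad_explicit using assms by (auto simp: coeff_sum coeff_monom intro!: sum.neutral)

definition low :: "nat \<Rightarrow> 'a::zero poly \<Rightarrow> bool" where
  "low m y \<longleftrightarrow> (\<forall>n\<ge>m. coeff y n = 0)"

lemma low_degree: "low m y \<Longrightarrow> degree y \<le> m"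
  unfolding low_def by (meson degree_le le_less_linear less_imp_le_nat not_less)

lemma low_lt: "low m y \<Longrightarrow> y \<noteq> 0 \<Longrightarrow> degree y < m"
  unfolding low_def by (metis leading_coeff_0_iff not_le)

lemma low_ad: "low m y \<Longrightarrow> low m (weyl_ad [:p:] (y::'a::field_char_0 wa))"
  using low_degree[of m y] coeff_ad_zero[of y] unfolding low_def by auto

lemma low_ad_self: "low (degree y) (weyl_ad [:p:] (y::'a::field_char_0 wa))"
  using coeff_ad_zero[of y] unfolding low_def by auto

lemma low_adpow: "low m y \<Longrightarrow> low m ((weyl_ad [:p:] ^^ k) (y::'a::field_char_0 wa))"
  by (induction k) (simp_all add: low_ad)

lemma low_0[simp]: "low m 0" by (simp add: low_def)
lemma low_add: "low m x \<Longrightarrow> low m y \<Longrightarrow> low m (x + y)" by (simp add: low_def)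
lemma low_diff: "low m x \<Longrightarrow> low m y \<Longrightarrow> low m (x - y)" by (simp add: low_def)
lemma low_scal: "low m x \<Longrightarrow> low m (weyl_scal c (x::'a::field_char_0 wa))"
  by (simp add: low_def weyl_scal_def coeff_map_poly)
lemma low_sum: "(\<And>a. a \<in> A \<Longrightarrow> low m (g a)) \<Longrightarrow> low m (\<Sum>a\<in>A. g a)"
  by (induction A rule: infinite_finite_induct) (simp_all add: low_add)

lemma nilp: "low m y \<Longrightarrow> (weyl_ad [:p:] ^^ m) (y::'a::field_char_0 wa) = 0"
proof (induction m arbitrary: y)
  case 0 then show ?case unfolding low_def by (simp add: poly_eq_iff)
next
  case (Suc m)
  have dm: "degree y \<le> m" using low_lt[OF Suc.prems] by (cases "y = 0") auto
  have "low m (weyl_ad [:p:] y)"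
    using coeff_ad_zero[of y _ p] dm unfolding low_def by auto
  then show ?case using Suc.IH by (simp add: funpow_Suc_right del: funpow.simps)
qed

lemma low_Suc_deg: "low (Suc (degree y)) y"
  by (simp add: low_def coeff_eq_0)

definition EK :: "nat \<Rightarrow> 'a::field_char_0 wa \<Rightarrow> 'a wa \<Rightarrow> 'a wa" where
  "EK K P x = (\<Sum>j<K. weyl_scal (1 / fact j) ((weyl_ad P ^^ j) x))"

lemma exp_EK:
  fixes x :: "'a::field_char_0 wa"
  assumes "low K x"
  shows "weyl_exp_ad [:p:] x = EK K [:p:] x"
proof -
  let ?L = "LEAST n. (weyl_ad [:p:] ^^ n) x = 0"
  have z: "(weyl_ad [:p:] ^^ K) x = 0" by (rule nilp[OF assms])
  have LK: "?L \<le> K" by (rule Least_le) (rule z)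
  have L0: "(weyl_ad [:p:] ^^ ?L) x = 0" by (rule LeastI) (rule z)
  have zz: "(weyl_ad [:p:] ^^ j) x = 0" if "?L \<le> j" for j
  proof -
    have "(weyl_ad [:p:] ^^ j) x = (weyl_ad [:p:] ^^ (j - ?L)) ((weyl_ad [:p:] ^^ ?L) x)"
      using that by (simp add: adpow_add)
    then show ?thesis by (simp add: L0)
  qed
  show ?thesis unfolding weyl_exp_ad_def EK_def
    by (rule sum.mono_neutral_left) (use LK zz in auto)
qed

lemma EK_diff: "EK K P (x - y) = EK K P x - EK K P y"
  by (simp add: EK_def adpow_diff scal_diff_right sum_subtractf)

lemma exp_diff:
  fixes x y :: "'a::field_char_0 wa"
  shows "weyl_exp_ad [:p:] (x - y) = weyl_exp_ad [:p:] x - weyl_exp_ad [:p:] y"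
proof -
  let ?K = "Suc (max (degree x) (max (degree y) (degree (x - y))))"
  have "low ?K z" if "z \<in> {x, y, x - y}" for z
    using that by (auto simp: low_def coeff_eq_0)
  then show ?thesis by (simp add: exp_EK[of ?K] EK_diff)
qed

lemma EK_split:
  assumes "1 \<le> K"
  shows "EK K P x = x + (\<Sum>j\<in>{1..<K}. weyl_scal (1 / fact j) ((weyl_ad P ^^ j) (x::'a::field_char_0 wa)))"
proof -
  have "{..<K} = insert 0 {1..<K}" using assms by auto
  then show ?thesis unfolding EK_def by simp
qed

definition wclosed :: "'a::field_char_0 wa set \<Rightarrow> bool" where
  "wclosed J \<longleftrightarrow> 0 \<in> J \<and> (\<forall>x\<in>J. \<forall>y\<in>J. x + y \<in> J \<and> x - y \<in> J) \<and> (\<forall>x\<in>J. \<forall>c. weyl_scal c x \<in> J)"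

lemma wc_sum: "wclosed J \<Longrightarrow> (\<And>a. a \<in> A \<Longrightarrow> g a \<in> J) \<Longrightarrow> (\<Sum>a\<in>A. g a) \<in> J"
  by (induction A rule: infinite_finite_induct) (auto simp: wclosed_def)

lemma core_fwd:
  fixes J :: "'a::field_char_0 wa set"
  assumes wc: "wclosed J" and ex: "\<And>x. x \<in> J \<Longrightarrow> weyl_exp_ad [:p:] x \<in> J"
  shows "x \<in> J \<Longrightarrow> weyl_ad [:p:] x \<in> J"
proof (induction "degree x" arbitrary: x rule: less_induct)
  case less
  let ?N = "weyl_ad [:p:]"
  have J0: "0 \<in> J" and Jd: "\<And>x y. x \<in> J \<Longrightarrow> y \<in> J \<Longrightarrow> x - y \<in> J"
    and Js: "\<And>x c. x \<in> J \<Longrightarrow> weyl_scal c x \<in> J" using wc by (auto simp: wclosed_def)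
  show ?case
  proof (cases "degree x = 0")
    case True
    then have "?N x = 0" using coeff_ad_zero[of x _ p] by (simp add: poly_eq_iff)
    then show ?thesis using J0 by simp
  next
    case False
    define m where "m = degree x"
    define K where "K = Suc m"
    have m0: "0 < m" using False m_def by simp
    have IH': "?N y \<in> J" if "y \<in> J" "low m y" for y
    proof (cases "y = 0")
      case True then show ?thesis using J0 by simp
    next
      case False
      then have "degree y < degree x" using low_lt[OF that(2)] m_def by simp
      then show ?thesis using less.hyps that(1) by blast
    qed
    have K1: "1 \<le> K" by (simp add: K_def)
    have lowK: "low K x" unfolding K_def m_def by (rule low_Suc_deg)
    define e where "e = weyl_exp_ad [:p:] x - x"
    have eJ: "e \<in> J" unfolding e_def using ex[OF less.prems] less.prems by (rule Jd)
    have e_eq: "e = (\<Sum>j\<in>{1..<K}. weyl_scal (1 / fact j) ((?N ^^ j) x))"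
      unfolding e_def exp_EK[OF lowK] EK_split[OF K1] by (simp only: add_diff_cancel_left')
    have lowj: "low m ((?N ^^ j) x)" if "1 \<le> j" for j
    proof -
      have "(?N ^^ j) x = (?N ^^ (j - 1)) ((?N ^^ 1) x)" using that by (subst adpow_add) simp
      then show ?thesis using low_adpow[OF low_ad_self[of x p]] m_def by simp
    qed
    have low_e: "low m e" unfolding e_eq by (rule low_sum) (auto intro!: low_scal lowj)
    have C: "(?N ^^ k) e \<in> J \<and> low m ((?N ^^ k) e)" for k
    proof (induction k)
      case 0 then show ?case using eJ low_e by simp
    next
      case (Suc k) then show ?case using IH' by (simp add: low_ad)
    qed
    have D: "\<And>k. K - k = d \<Longrightarrow> 1 \<le> k \<Longrightarrow> (?N ^^ k) x \<in> J" for d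
    proof (induction d rule: less_induct)
      case (less d)
      fix k assume kd: "K - k = d" and k1: "1 \<le> k"
      show "(?N ^^ k) x \<in> J"
      proof (cases "K \<le> k")
        case True
        have "(?N ^^ k) x = (?N ^^ (k - K)) ((?N ^^ K) x)" using True by (subst adpow_add) simp
        then show ?thesis using nilp[OF lowK] J0 by simp
      next
        case False
        have ins: "{1..<K} = insert 1 {2..<K}" using False k1 by auto
        have "(?N ^^ (k - 1)) e = (\<Sum>j\<in>{1..<K}. weyl_scal (1 / fact j) ((?N ^^ (k - 1 + j)) x))"
          unfolding e_eq by (simp add: adpow_sum adpow_scal adpow_add)
        also have "\<dots> = (?N ^^ k) x + (\<Sum>j\<in>{2..<K}. weyl_scal (1 / fact j) ((?N ^^ (k - 1 + j)) x))"
          unfolding ins using k1 by simp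
        finally have eq: "(?N ^^ k) x = (?N ^^ (k - 1)) e - (\<Sum>j\<in>{2..<K}. weyl_scal (1 / fact j) ((?N ^^ (k - 1 + j)) x))"
          by (simp add: algebra_simps)
        have "(\<Sum>j\<in>{2..<K}. weyl_scal (1 / fact j) ((?N ^^ (k - 1 + j)) x)) \<in> J"
        proof (rule wc_sum[OF wc])
          fix j assume j: "j \<in> {2..<K}"
          have "K - (k - 1 + j) < d" using j kd False k1 by auto
          then have "(?N ^^ (k - 1 + j)) x \<in> J" using less.IH[of "K - (k - 1 + j)" "k - 1 + j"] j by auto
          then show "weyl_scal (1 / fact j) ((?N ^^ (k - 1 + j)) x) \<in> J" by (rule Js)
        qed
        then show ?thesis unfolding eq using C[of "k - 1"] by (intro Jd) auto
      qed
    qed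
    have "(?N ^^ 1) x \<in> J" by (rule D[OF refl]) simp
    then show ?thesis by simp
  qed
qed

lemma core_bwd:
  fixes J :: "'a::field_char_0 wa set"
  assumes wc: "wclosed J" and ad: "\<And>x. x \<in> J \<Longrightarrow> weyl_ad [:p:] x \<in> J"
  shows "weyl_exp_ad [:p:] ` J = J"
proof -
  have J0: "0 \<in> J" and Jd: "\<And>x y. x \<in> J \<Longrightarrow> y \<in> J \<Longrightarrow> x - y \<in> J"
    and Js: "\<And>x c. x \<in> J \<Longrightarrow> weyl_scal c x \<in> J" using wc by (auto simp: wclosed_def)
  have adp: "(weyl_ad [:p:] ^^ k) x \<in> J" if "x \<in> J" for x k
    using that by (induction k) (simp_all add: ad)
  have sub: "weyl_exp_ad [:p:] x \<in> J" if "x \<in> J" for x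
    unfolding exp_EK[OF low_Suc_deg] EK_def using that by (intro wc_sum[OF wc] Js adp)
  have sup: "x \<in> weyl_exp_ad [:p:] ` J" if "x \<in> J" for x
    using that
  proof (induction "degree x" arbitrary: x rule: less_induct)
    case less
    define m where "m = degree x"
    define e where "e = weyl_exp_ad [:p:] x - x"
    have eJ: "e \<in> J" unfolding e_def using sub[OF less.prems] less.prems by (rule Jd)
    have K1': "1 \<le> Suc (degree x)" by simp
    have e_eq: "e = (\<Sum>j\<in>{1..<Suc m}. weyl_scal (1 / fact j) ((weyl_ad [:p:] ^^ j) x))"
      unfolding e_def exp_EK[OF low_Suc_deg[of x]] m_def EK_split[OF K1'] by (simp only: add_diff_cancel_left')
    have lowj: "low m ((weyl_ad [:p:] ^^ j) x)" if "1 \<le> j" for j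
    proof -
      have "(weyl_ad [:p:] ^^ j) x = (weyl_ad [:p:] ^^ (j - 1)) ((weyl_ad [:p:] ^^ 1) x)" using that by (subst adpow_add) simp
      then show ?thesis using low_adpow[OF low_ad_self[of x p]] m_def by simp
    qed
    have low_e: "low m e" unfolding e_eq by (rule low_sum) (auto intro!: low_scal lowj)
    show ?case
    proof (cases "e = 0")
      case True
      then have "x = weyl_exp_ad [:p:] x" unfolding e_def by simp
      then show ?thesis using less.prems by blast
    next
      case False
      then have "m \<noteq> 0" using low_e unfolding low_def by (auto simp: poly_eq_iff)
      then have "degree e < degree x" using low_lt[OF low_e False] m_def by simp
      then obtain y where y: "y \<in> J" "e = weyl_exp_ad [:p:] y" using less.hyps eJ by blast
      have ey: "weyl_exp_ad [:p:] y = weyl_exp_ad [:p:] x - x" using y(2) by (simp add: e_def)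
      have "weyl_exp_ad [:p:] (x - y) = x" by (simp add: exp_diff ey)
      moreover have "x - y \<in> J" using less.prems y(1) by (rule Jd)
      ultimately show ?thesis by (metis image_eqI)
    qed
  qed
  show ?thesis using sub sup by blast
qed

lemma ptf_0[simp]: "poly_to_frac 0 = 0"
  by (simp add: poly_to_frac_def fract_collapse)
lemma ptf_add: "poly_to_frac (a + b) = poly_to_frac a + poly_to_frac b"
  by (simp add: poly_to_frac_def)
lemma ptf_mult: "poly_to_frac (a * b) = poly_to_frac a * poly_to_frac b"
  by (simp add: poly_to_frac_def)
lemma ptf_eq: "poly_to_frac a = poly_to_frac b \<longleftrightarrow> a = b"
  by (simp add: poly_to_frac_def eq_fract)
lemma ptf_sum: "poly_to_frac (\<Sum>i\<in>A. g i) = (\<Sum>i\<in>A. poly_to_frac (g i))"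
  by (induction A rule: infinite_finite_induct) (simp_all add: ptf_add)

lemma diffop_map: "diffop_act (map_poly poly_to_frac y) f = poly_to_frac (act y f)"
proof -
  have nz: "poly_to_frac x \<noteq> 0" if "x \<noteq> 0" for x :: "'a poly"
    using that ptf_eq[of x 0] by simp
  have d: "degree (map_poly poly_to_frac y) = degree y" by (rule degree_map_poly) (rule nz)
  show ?thesis
    by (simp add: diffop_act_def d coeff_map_poly act_def ptf_sum ptf_mult)
qed

lemma map_ptf_inj: "map_poly poly_to_frac x = map_poly poly_to_frac y \<Longrightarrow> x = y"
  by (simp add: poly_eq_iff coeff_map_poly ptf_eq)

lemma J_char:
  fixes I :: "'a::field_char_0 wa set"
  assumes "map_poly poly_to_frac ` weyl_theta ` I = D_RW W"
  shows "weyl_theta ` I = {y. \<forall>f. act y f \<in> W}"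
proof
  show "weyl_theta ` I \<subseteq> {y. \<forall>f. act y f \<in> W}"
  proof
    fix y assume "y \<in> weyl_theta ` I"
    then have "map_poly poly_to_frac y \<in> D_RW W" using assms by blast
    then have "poly_to_frac (act y f) \<in> poly_to_frac ` W" for f
      by (simp add: D_RW_def diffop_map)
    then have "act y f \<in> W" for f by (metis imageE ptf_eq)
    then show "y \<in> {y. \<forall>f. act y f \<in> W}" by simp
  qed
next
  show "{y. \<forall>f. act y f \<in> W} \<subseteq> weyl_theta ` I"
  proof
    fix y assume "y \<in> {y. \<forall>f. act y f \<in> W}"
    then have "map_poly poly_to_frac y \<in> D_RW W" by (simp add: D_RW_def diffop_map)
    then obtain z where "z \<in> weyl_theta ` I" "map_poly poly_to_frac z = map_poly poly_to_frac y"
      using assms by (metis imageE)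
    then show "y \<in> weyl_theta ` I" using map_ptf_inj by metis
  qed
qed

lemma ksub_diff: "k_subspace W \<Longrightarrow> x \<in> W \<Longrightarrow> y \<in> W \<Longrightarrow> x - y \<in> W"
  unfolding k_subspace_def by (metis diff_conv_add_uminus minus_one_mult_self smult_1_left smult_minus_left)

lemma JW_closed:
  assumes ks: "k_subspace W"
  shows "wclosed {y::'a::field_char_0 wa. \<forall>f. act y f \<in> W}"
  using ks unfolding wclosed_def
  by (auto simp: act_add act_diff act_scal ksub_diff[OF ks] k_subspace_def)

lemma higher_pderiv_low:
  assumes "r = 0 \<or> degree r < N"
  shows "(pderiv ^^ N) (r::'a::field_char_0 poly) = 0"
proof -
  have "coeff r (n + N) = 0" for n
    using assms by (auto simp: coeff_eq_0)
  then show ?thesis by (simp add: poly_eq_iff coeff_higher_pderiv)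
qed

lemma construct_op:
  fixes b w :: "'a::field_char_0 poly"
  assumes b0: "b \<noteq> 0" and bs: "ord_O b \<subseteq> stab_S W" and w: "w \<in> W"
  shows "\<exists>X. (\<forall>f. act X f \<in> W) \<and> act X 1 = w"
proof -
  define N where "N = degree b"
  define U where "U = smult ((-1) ^ N / fact N) (tt ^ N - tt ^ N mod b)"
  have bU: "b dvd U"
  proof -
    have "tt ^ N - tt ^ N mod b = tt ^ N div b * b" by (metis add_diff_cancel_right' div_mult_mod_eq)
    then show ?thesis unfolding U_def by (simp add: dvd_smult)
  qed
  have r0: "(pderiv ^^ N) (tt ^ N mod b) = 0"
    by (rule higher_pderiv_low) (use degree_mod_less[OF b0, of "tt ^ N"] N_def in auto)
  have UN: "(pderiv ^^ N) U = [:(-1) ^ N:]"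
    unfolding U_def by (simp only: higher_pderiv_smult higher_pderiv_diff r0) (simp add: tpow_monom higher_pderiv_monom_self)
  have UN1: "(pderiv ^^ Suc N) U = 0"
    using UN by (simp add: pderiv_pCons)
  define u where "u i = smult ((-1) ^ (N - i)) ((pderiv ^^ (N - i)) U)" for i
  define c where "c f = (\<Sum>i\<le>N. u i * (pderiv ^^ i) f)" for f
  have tele: "pderiv (\<Sum>i\<le>m. u i * (pderiv ^^ i) f) =
      smult ((-1) ^ (N - m)) ((pderiv ^^ (N - m)) U * (pderiv ^^ Suc m) f)" if "m \<le> N" for m f
    using that
  proof (induction m)
    case 0
    have "pderiv (u 0) = 0" using UN1 by (simp add: u_def pderiv_smult)
    then have "pderiv (u 0 * f) = u 0 * pderiv f" using pderiv_mult[of "u 0" f] by simp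
    then show ?case by (simp add: u_def)
  next
    case (Suc m)
    have e1: "Suc (N - Suc m) = N - m" using Suc.prems by simp
    have e2: "(-1::'a) ^ (N - m) = - ((-1) ^ (N - Suc m))"
      using Suc.prems by (metis e1 power_Suc mult_minus1)
    have pu: "pderiv (u (Suc m)) = smult ((-1) ^ (N - Suc m)) ((pderiv ^^ (N - m)) U)"
      by (simp add: u_def pderiv_smult flip: e1)
    have IH: "pderiv (\<Sum>i\<le>m. u i * (pderiv ^^ i) f) =
      smult ((-1) ^ (N - m)) ((pderiv ^^ (N - m)) U * (pderiv ^^ Suc m) f)" using Suc by simp
    have "pderiv (\<Sum>i\<le>Suc m. u i * (pderiv ^^ i) f) =
       pderiv (\<Sum>i\<le>m. u i * (pderiv ^^ i) f) + (u (Suc m) * pderiv ((pderiv ^^ Suc m) f) +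
         (pderiv ^^ Suc m) f * pderiv (u (Suc m)))"
      by (simp only: sum.atMost_Suc pderiv_add pderiv_mult)
    also have "\<dots> = smult ((-1) ^ (N - Suc m)) ((pderiv ^^ (N - Suc m)) U * (pderiv ^^ Suc (Suc m)) f)"
      unfolding IH pu by (simp add: u_def e2 algebra_simps)
    finally show ?case .
  qed
  have pc: "pderiv (c f) = U * (pderiv ^^ Suc N) f" for f
    unfolding c_def using tele[of N f] by simp
  have cS: "c f \<in> stab_S W" for f
  proof -
    have "b dvd pderiv (c f)" unfolding pc using bU by simp
    then show ?thesis using bs by (auto simp: ord_O_def)
  qed
  define X where "X = (\<Sum>i\<le>N. monom (w * u i) i)"
  have aX: "act X f = c f * w" for f
    by (simp add: X_def c_def act_sum act_monom sum_distrib_left mult.assoc mult.commute[of _ w])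
  have c1: "c 1 = 1"
  proof -
    have Z: "\<forall>i\<in>{..N} - {0}. u i * (pderiv ^^ i) 1 = 0"
      using higher_pderiv_monom_gt[of 0 _ "1::'a"] by (auto simp: monom_0 one_pCons)
    have "c 1 = u 0 * (pderiv ^^ 0) 1"
      unfolding c_def by (simp add: sum.remove[of _ 0] sum.neutral[OF Z])
    then show ?thesis by (simp add: u_def UN)
  qed
  have "\<forall>f. act X f \<in> W" using cS w by (auto simp: aX stab_S_def)
  moreover have "act X 1 = w" by (simp add: aX c1)
  ultimately show ?thesis by blast
qed

lemma act_ad: "act (weyl_ad [:p:] x) f = act x (p * f) - p * act x f"
  by (simp add: weyl_ad_def act_diff act_mult act_const)

theorem corollary7:
  fixes I :: "'a::field_char_0 poly poly set" and W :: "'a poly set" and q :: "'a poly"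
  assumes "weyl_right_ideal I"
    and "\<exists>x\<in>I. x \<noteq> 0 \<and> x \<in> weyl_kd"
    and "primary_decomposable W"
    and "map_poly poly_to_frac ` weyl_theta ` I = D_RW W"
  shows "weyl_exp_ad (weyl_of_kd q) ` I = I \<longleftrightarrow>
         weyl_theta (weyl_of_kd q) \<in> (\<lambda>a. [:a:]) ` stab_S W"
proof -
  from assms(3) obtain b where ks: "k_subspace W" and b0: "b \<noteq> 0" and bs: "ord_O b \<subseteq> stab_S W"
    unfolding primary_decomposable_def by blast
  define J where "J = weyl_theta ` I"
  have Jc: "J = {y. \<forall>f. act y f \<in> W}" unfolding J_def by (rule J_char[OF assms(4)])
  have wc: "wclosed J" unfolding Jc by (rule JW_closed[OF ks])
  have tq: "weyl_theta (weyl_of_kd q) = [:q:]" by (rule theta_kd)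
  have img: "weyl_theta ` (weyl_exp_ad (weyl_of_kd q) ` I) = weyl_exp_ad [:q:] ` J"
    unfolding J_def image_image by (simp add: theta_exp tq)
  have eqv: "weyl_exp_ad (weyl_of_kd q) ` I = I \<longleftrightarrow> weyl_exp_ad [:q:] ` J = J"
  proof
    assume "weyl_exp_ad (weyl_of_kd q) ` I = I"
    then show "weyl_exp_ad [:q:] ` J = J" using img J_def by simp
  next
    assume "weyl_exp_ad [:q:] ` J = J"
    then have "weyl_theta ` (weyl_exp_ad (weyl_of_kd q) ` I) = weyl_theta ` I" using img J_def by simp
    then show "weyl_exp_ad (weyl_of_kd q) ` I = I" by (simp only: inj_image_eq_iff[OF theta_inj])
  qed
  have img2: "[:q:] \<in> (\<lambda>a. [:a:]) ` stab_S W \<longleftrightarrow> q \<in> stab_S W"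
  proof
    assume "[:q:] \<in> (\<lambda>a. [:a:]) ` stab_S W"
    then obtain a where "a \<in> stab_S W" "[:q:] = [:a:]" by (rule imageE)
    then show "q \<in> stab_S W" by simp
  qed (rule imageI)
  have main: "weyl_exp_ad [:q:] ` J = J \<longleftrightarrow> q \<in> stab_S W"
  proof
    assume e: "weyl_exp_ad [:q:] ` J = J"
    have adJ: "weyl_ad [:q:] x \<in> J" if "x \<in> J" for x
      by (rule core_fwd[OF wc _ that]) (use e in blast)
    show "q \<in> stab_S W" unfolding stab_S_def
    proof (intro CollectI ballI)
      fix v assume v: "v \<in> W"
      obtain X where X: "\<forall>f. act X f \<in> W" "act X 1 = v" using construct_op[OF b0 bs v] by blast
      have "X \<in> J" using X(1) Jc by simp
      then have "weyl_ad [:q:] X \<in> J" by (rule adJ)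
      then have "act (weyl_ad [:q:] X) 1 \<in> W" using Jc by simp
      then have h: "act X q - q * v \<in> W" by (simp add: act_ad X(2))
      have "act X q \<in> W" using X(1) by simp
      then have "act X q - (act X q - q * v) \<in> W" using h by (rule ksub_diff[OF ks])
      then show "q * v \<in> W" by simp
    qed
  next
    assume qs: "q \<in> stab_S W"
    have "weyl_ad [:q:] x \<in> J" if "x \<in> J" for x
    proof -
      have ax: "act x g \<in> W" for g using that Jc by simp
      have "act (weyl_ad [:q:] x) f \<in> W" for f
        unfolding act_ad by (rule ksub_diff[OF ks ax]) (use qs ax in \<open>simp add: stab_S_def\<close>)
      then show ?thesis using Jc by simp
    qed
    then show "weyl_exp_ad [:q:] ` J = J" by (rule core_bwd[OF wc])
  qed
  show ?thesis using eqv main tq img2 by simp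
qed

end
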